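(* There exist $\delta>0$ and a universal constant $C_0>0$ such that the following holds. Let $a_0(x)=\cos(x)+\tilde a_0(x)$ on $[-\pi,\pi]$ with $\|\tilde a_0\|_{C^3([-\pi,\pi])}\le\delta$, and let $x_0^*$ be the unique point at which $a_0$ attains its maximum. Set $$\mu_0=-\partial_x^2a_0(x_0^* ),\qquad\alpha_{-1,0}=1+\frac{a_0(x_0^* )}{\partial_x^2a_0(x_0^* )},\qquad\alpha_{1,0}=0,$$ and on $[-\pi-x_0^*,\pi-x_0^*]$ define $$\eta_0(y)=\frac1{\mu_0}a_0(x_0^*+y)-\cos(y),\qquad \xi_0(y)=\eta_0(y)-\alpha_{-1,0}\varphi_{-1}(y)-\alpha_{1,0}\varphi_1(y),$$ where $\varphi_{-1}(y)=-2\cos y+1-y\sin y$ and $\varphi_1(y)=2\cos y+1+y\sin y$ (and $a_0$ is extended $2\pi$-periodically). Then $|\mu_0-1|\le C_0\delta$, $|\alpha_{-1,0}|\le C_0\delta$, $\xi_0(0)=\partial_y\xi_0(0)=\partial_y^2\xi_0(0)=0$, and $$\|\xi_0\|_{L^\infty([-\pi-x_0^*,\pi-x_0^*])}+\sum_{j=1}^3\|\partial_y^j\eta_0\|_{L^\infty([-\pi-x_0^*,\pi-x_0^*])}\le C_0\delta.$$ *)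

theory Defs
  imports "HOL-Analysis.Analysis"
begin

text \<open>j-th derivative of f relative to the set S (one-sided at endpoints of a closed interval).\<close>
fun nderiv :: "nat \<Rightarrow> (real \<Rightarrow> real) \<Rightarrow> real set \<Rightarrow> real \<Rightarrow> real" where
  "nderiv 0 f S = f"
| "nderiv (Suc j) f S = (\<lambda>x. vector_derivative (nderiv j f S) (at x within S))"

definition Ck_on :: "nat \<Rightarrow> (real \<Rightarrow> real) \<Rightarrow> real set \<Rightarrow> bool" where
  "Ck_on k f S \<longleftrightarrow>
     (\<forall>j<k. \<forall>x\<in>S. (nderiv j f S has_real_derivative nderiv (Suc j) f S x) (at x within S))
     \<and> continuous_on S (nderiv k f S)"

definition supnorm :: "(real \<Rightarrow> real) \<Rightarrow> real set \<Rightarrow> real" where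
  "supnorm f S = (SUP x\<in>S. \<bar>f x\<bar>)"

definition Ck_norm :: "nat \<Rightarrow> (real \<Rightarrow> real) \<Rightarrow> real set \<Rightarrow> real" where
  "Ck_norm k f S = (\<Sum>j\<le>k. supnorm (nderiv j f S) S)"

definition phi_m1 :: "real \<Rightarrow> real" where
  "phi_m1 y = - 2 * cos y + 1 - y * sin y"

definition phi_1 :: "real \<Rightarrow> real" where
  "phi_1 y = 2 * cos y + 1 + y * sin y"

end

theory Submission
  imports Defs
begin


lemma nderiv_eqI:
  fixes F :: "nat \<Rightarrow> real \<Rightarrow> real"
  assumes ab: "a < b"
    and d: "\<And>k x. k < n \<Longrightarrow> x \<in> {a..b} \<Longrightarrow> (F k has_real_derivative F (Suc k) x) (at x within {a..b})"
    and f: "\<And>x. x \<in> {a..b} \<Longrightarrow> f x = F 0 x"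
    and jn: "j \<le> n"
  shows "\<forall>x\<in>{a..b}. nderiv j f {a..b} x = F j x"
  using jn
proof (induction j)
  case 0 then show ?case using f by simp
next
  case (Suc j)
  then have IH: "\<forall>x\<in>{a..b}. nderiv j f {a..b} x = F j x" by simp
  show ?case
  proof
    fix x assume x: "x \<in> {a..b}"
    have "(F j has_real_derivative F (Suc j) x) (at x within {a..b})" using d Suc x by simp
    then have "(nderiv j f {a..b} has_real_derivative F (Suc j) x) (at x within {a..b})"
      by (rule has_field_derivative_transform_within[OF _ zero_less_one x]) (use IH x in auto)
    then show "nderiv (Suc j) f {a..b} x = F (Suc j) x"
      using vector_derivative_within_closed_interval[OF ab x]
      by (simp add: has_real_derivative_iff_has_vector_derivative)
  qed
qed

lemma Ck_bound:
  assumes ck: "Ck_on 3 g {-pi..pi}" and nm: "Ck_norm 3 g {-pi..pi} \<le> d"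
    and k: "k \<le> 3" and x: "x \<in> {-pi..pi}"
  shows "\<bar>nderiv k g {-pi..pi} x\<bar> \<le> d"
proof -
  let ?S = "{-pi..pi}"
  have cont: "continuous_on ?S (nderiv j g ?S)" if "j \<le> 3" for j
  proof (cases "j < 3")
    case True
    then show ?thesis using ck unfolding Ck_on_def by (intro DERIV_continuous_on[where D="nderiv (Suc j) g ?S"]) auto
  next
    case False
    then have "j = 3" using that by simp
    then show ?thesis using ck unfolding Ck_on_def by simp
  qed
  have bdd: "bdd_above ((\<lambda>x. \<bar>nderiv j g ?S x\<bar>) ` ?S)" if "j \<le> 3" for j
  proof -
    have "continuous_on ?S (\<lambda>x. \<bar>nderiv j g ?S x\<bar>)"
      using cont[OF that] by (intro continuous_intros)
    then have "compact ((\<lambda>x. \<bar>nderiv j g ?S x\<bar>) ` ?S)"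
      by (intro compact_continuous_image) auto
    then show ?thesis by (intro bounded_imp_bdd_above compact_imp_bounded)
  qed
  have up: "\<bar>nderiv j g ?S y\<bar> \<le> supnorm (nderiv j g ?S) ?S" if "j \<le> 3" "y \<in> ?S" for j y
    unfolding supnorm_def by (rule cSUP_upper[OF that(2) bdd[OF that(1)]])
  have nn: "0 \<le> supnorm (nderiv j g ?S) ?S" if "j \<in> {..3}" for j
    using up[of j 0] that by (meson abs_ge_zero atLeastAtMost_iff atMost_iff order_trans pi_ge_zero neg_le_0_iff_le)
  have "supnorm (nderiv k g ?S) ?S \<le> (\<Sum>j\<le>3. supnorm (nderiv j g ?S) ?S)"
    by (rule member_le_sum) (use k nn in auto)
  then show ?thesis using up[OF k x] nm unfolding Ck_norm_def by linarith
qed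

fun cder :: "nat \<Rightarrow> real \<Rightarrow> real" where
  "cder 0 = cos"
| "cder (Suc 0) = (\<lambda>x. - sin x)"
| "cder (Suc (Suc 0)) = (\<lambda>x. - cos x)"
| "cder _ = sin"

lemma cder_deriv: "k < 3 \<Longrightarrow> (cder k has_real_derivative cder (Suc k) x) (at x within S)"
proof -
  assume "k < 3"
  then have "k = 0 \<or> k = 1 \<or> k = 2" by auto
  then show ?thesis
    by (auto simp: numeral_2_eq_2 intro!: derivative_eq_intros)
qed

lemma cder_bound: "\<bar>cder k x\<bar> \<le> 1"
  by (cases k rule: cder.cases) auto

lemma cder_diff: "\<bar>cder k (a + y) - cder k y\<bar> \<le> (1 - cos a) + \<bar>sin a\<bar>"
proof -
  have c: "\<bar>cos (a + y) - cos y\<bar> \<le> (1 - cos a) + \<bar>sin a\<bar>"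
  proof -
    have "cos (a + y) - cos y = cos y * (cos a - 1) - sin y * sin a" by (simp add: cos_add algebra_simps)
    also have "\<bar>\<dots>\<bar> \<le> \<bar>cos y\<bar> * \<bar>cos a - 1\<bar> + \<bar>sin y\<bar> * \<bar>sin a\<bar>"
      by (metis abs_mult abs_triangle_ineq4)
    also have "\<dots> \<le> 1 * \<bar>cos a - 1\<bar> + 1 * \<bar>sin a\<bar>"
      by (intro add_mono mult_right_mono) auto
    finally show ?thesis using cos_le_one[of a] by simp
  qed
  have s: "\<bar>sin (a + y) - sin y\<bar> \<le> (1 - cos a) + \<bar>sin a\<bar>"
  proof -
    have "sin (a + y) - sin y = sin y * (cos a - 1) + cos y * sin a" by (simp add: sin_add algebra_simps)
    also have "\<bar>\<dots>\<bar> \<le> \<bar>sin y\<bar> * \<bar>cos a - 1\<bar> + \<bar>cos y\<bar> * \<bar>sin a\<bar>"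
      by (metis abs_mult abs_triangle_ineq)
    also have "\<dots> \<le> 1 * \<bar>cos a - 1\<bar> + 1 * \<bar>sin a\<bar>"
      by (intro add_mono mult_right_mono) auto
    finally show ?thesis using cos_le_one[of a] by simp
  qed
  show ?thesis
    by (cases k rule: cder.cases) (use c s in \<open>auto simp: abs_minus_commute\<close>)
qed

fun pder :: "nat \<Rightarrow> real \<Rightarrow> real" where
  "pder 0 = phi_m1"
| "pder (Suc 0) = (\<lambda>y. sin y - y * cos y)"
| "pder (Suc (Suc 0)) = (\<lambda>y. y * sin y)"
| "pder _ = (\<lambda>y. sin y + y * cos y)"

lemma pder_deriv: "k < 3 \<Longrightarrow> (pder k has_real_derivative pder (Suc k) x) (at x within S)"
proof -
  assume "k < 3"
  then have "k = 0 \<or> k = 1 \<or> k = 2" by auto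
  then show ?thesis
    proof (elim disjE)
    assume "k = 0"
    have e: "phi_m1 = (\<lambda>y. - 2 * cos y + 1 - y * sin y)" by (simp add: fun_eq_iff phi_m1_def)
    show ?thesis unfolding \<open>k = 0\<close> by (simp add: e) (auto intro!: derivative_eq_intros simp: algebra_simps)
  qed (auto simp: numeral_2_eq_2 intro!: derivative_eq_intros simp: algebra_simps)
qed



lemma part1:
  fixes at0 :: "real \<Rightarrow> real" and \<delta> :: real
  assumes d_def: "\<delta> = 1/10"
    and ck: "Ck_on 3 at0 {-pi..pi}" and nm: "Ck_norm 3 at0 {-pi..pi} \<le> \<delta>"
  shows "(let a0 = (\<lambda>x. cos x + at0 x) in
      (\<exists>!x0. x0 \<in> {-pi..pi} \<and> (\<forall>x\<in>{-pi..pi}. a0 x \<le> a0 x0)) \<and>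
      (\<forall>x0. x0 \<in> {-pi..pi} \<and> (\<forall>x\<in>{-pi..pi}. a0 x \<le> a0 x0) \<longrightarrow>
        (let mu0 = - nderiv 2 a0 {-pi..pi} x0;
             am1 = 1 + a0 x0 / nderiv 2 a0 {-pi..pi} x0;
             a1 = (0::real);
             T = {-pi - x0..pi - x0};
             eta0 = (\<lambda>y. a0 (x0 + y) / mu0 - cos y);
             xi0 = (\<lambda>y. eta0 y - am1 * phi_m1 y - a1 * phi_1 y)
         in \<bar>mu0 - 1\<bar> \<le> 100 * \<delta> \<and> \<bar>am1\<bar> \<le> 100 * \<delta> \<and>
            xi0 0 = 0 \<and> nderiv 1 xi0 T 0 = 0 \<and> nderiv 2 xi0 T 0 = 0 \<and>
            supnorm xi0 T + (\<Sum>j=1..3. supnorm (nderiv j eta0 T) T) \<le> 100 * \<delta>)))"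
proof -
  define D where "D = (\<lambda>k. nderiv k at0 {-pi..pi})"
  have hD: "\<bar>D k x\<bar> \<le> \<delta>" if "k \<le> 3" "x \<in> {-pi..pi}" for k x
    unfolding D_def by (rule Ck_bound[OF ck nm that])
  have dD: "(D k has_real_derivative D (Suc k) x) (at x within {-pi..pi})"
    if "k < 3" "x \<in> {-pi..pi}" for k x
    unfolding D_def using ck that unfolding Ck_on_def by blast
  have dDf: "(D k has_real_derivative D (Suc k) x) (at x)"
    if "k < 3" "\<bar>x\<bar> < pi" for k x
  proof -
    have xi: "x \<in> interior {-pi..pi}" using that(2) by (simp add: abs_less_iff)
    have xs: "x \<in> {-pi..pi}" using that(2) by (simp add: abs_less_iff)
    have "at x within {-pi..pi} = at x" by (rule at_within_interior[OF xi])
    then show ?thesis using dD[OF that(1) xs] by metis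
  qed
  define A where "A = (\<lambda>k x. cder k x + D k x)"
  have dA: "(A k has_real_derivative A (Suc k) x) (at x within {-pi..pi})"
    if "k < 3" "x \<in> {-pi..pi}" for k x
    unfolding A_def by (intro DERIV_add cder_deriv dD that)
  have dAf: "(A k has_real_derivative A (Suc k) x) (at x)"
    if "k < 3" "\<bar>x\<bar> < pi" for k x
    unfolding A_def by (intro DERIV_add cder_deriv dDf that)
  have a0A: "(\<lambda>x. cos x + at0 x) = A 0" by (simp add: fun_eq_iff A_def D_def)
  have hA: "\<forall>x\<in>{-pi..pi}. nderiv j (A 0) {-pi..pi} x = A j x" if "j \<le> 3" for j
    by (rule nderiv_eqI[of "-pi" pi 3 A]) (use dA that in auto)
  have cosb: "1/2 \<le> cos x" if "\<bar>x\<bar> \<le> pi/3" for x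
  proof -
    have "cos (pi/3) \<le> cos \<bar>x\<bar>" by (rule cos_monotone_0_pi_le) (use that in auto)
    then show ?thesis by (simp add: cos_60)
  qed
  have maxp: "\<bar>x0\<bar> < pi/3 \<and> A 1 x0 = 0"
    if x0: "x0 \<in> {-pi..pi}" "\<forall>x\<in>{-pi..pi}. A 0 x \<le> A 0 x0" for x0
  proof -
    have "A 0 0 \<le> A 0 x0" using x0 by auto
    moreover have "A 0 0 \<ge> 1 - \<delta>" using hD[of 0 0] by (auto simp: A_def)
    moreover have "A 0 x0 \<le> cos x0 + \<delta>" using hD[of 0 x0] x0 by (auto simp: A_def)
    ultimately have c: "cos x0 \<ge> 4/5" using d_def by simp
    have lt: "\<bar>x0\<bar> < pi/3"
    proof (rule ccontr)
      assume "\<not> \<bar>x0\<bar> < pi/3"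
      then have "cos \<bar>x0\<bar> \<le> cos (pi/3)" by (intro cos_monotone_0_pi_le) (use x0 in auto)
      then show False using c by (simp add: cos_60)
    qed
    have "A (Suc 0) x0 = 0"
    proof (rule DERIV_local_max[OF dAf[of 0 x0], of "pi/2"])
      show "\<forall>y. \<bar>x0 - y\<bar> < pi / 2 \<longrightarrow> A 0 y \<le> A 0 x0"
      proof (intro allI impI)
        fix y assume "\<bar>x0 - y\<bar> < pi / 2"
        then have "y \<in> {-pi..pi}" using lt pi_gt_zero unfolding atLeastAtMost_iff by arith
        then show "A 0 y \<le> A 0 x0" using x0 by blast
      qed
    qed (use lt pi_gt_zero in auto)
    with lt show ?thesis by simp
  qed
  have nouniq: False if uv: "u < v" "\<bar>u\<bar> < pi/3" "\<bar>v\<bar> < pi/3" "A 1 u = 0" "A 1 v = 0" for u v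
  proof -
    obtain z where z: "u < z" "z < v" "A 1 v - A 1 u = (v - u) * A 2 z"
    proof -
      have "DERIV (A 1) x :> A 2 x" if "u \<le> x" "x \<le> v" for x
      proof -
        have "\<bar>x\<bar> < pi" using that uv pi_gt_zero by auto
        then show ?thesis using dAf[of 1 x] by (simp add: numeral_2_eq_2)
      qed
      then show ?thesis using MVT2[OF uv(1), of "A 1" "A 2"] that by blast
    qed
    have "\<bar>z\<bar> \<le> pi/3" using z uv by auto
    moreover have zs: "z \<in> {-pi..pi}" using \<open>\<bar>z\<bar> \<le> pi/3\<close> pi_gt_zero unfolding atLeastAtMost_iff by arith
    ultimately have "A 2 z < 0" using cosb[of z] hD[of 2 z] d_def
      by (auto simp: A_def numeral_2_eq_2)
    moreover have "(v - u) * A 2 z = 0" using z uv by simp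
    ultimately show False using uv by simp
  qed
  have contA: "continuous_on {-pi..pi} (A 0)"
    by (rule DERIV_continuous_on[OF dA[of 0]]) auto
  obtain xm where xm: "xm \<in> {-pi..pi}" "\<forall>y\<in>{-pi..pi}. A 0 y \<le> A 0 xm"
    using continuous_attains_sup[OF _ _ contA] by auto
  have uniq: "\<exists>!x0. x0 \<in> {-pi..pi} \<and> (\<forall>x\<in>{-pi..pi}. A 0 x \<le> A 0 x0)"
  proof (rule ex1I[of _ xm])
    show "xm \<in> {-pi..pi} \<and> (\<forall>x\<in>{-pi..pi}. A 0 x \<le> A 0 xm)" using xm by auto
    fix y assume y: "y \<in> {-pi..pi} \<and> (\<forall>x\<in>{-pi..pi}. A 0 x \<le> A 0 y)"
    show "y = xm"
    proof (rule ccontr)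
      assume "y \<noteq> xm"
      then consider "y < xm" | "xm < y" by linarith
      moreover have "\<bar>y\<bar> < pi/3 \<and> A 1 y = 0" using maxp[of y] y by blast
      moreover have "\<bar>xm\<bar> < pi/3 \<and> A 1 xm = 0" using maxp[of xm] xm by blast
      ultimately show False using nouniq[of y xm] nouniq[of xm y] by blast
    qed
  qed
  show ?thesis
    unfolding a0A Let_def
  proof (rule conjI[OF uniq], intro allI impI)
    fix x0 assume x0: "x0 \<in> {-pi..pi} \<and> (\<forall>x\<in>{-pi..pi}. A 0 x \<le> A 0 x0)"
    have n2: "nderiv 2 (A 0) {-pi..pi} x0 = A 2 x0" using hA[of 2] x0 by auto
    have x0S: "x0 \<in> {-pi..pi}" using x0 by blast
    have lt: "\<bar>x0\<bar> < pi/3" and A1: "A 1 x0 = 0" using maxp[of x0] x0 by auto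
    have dpos: "0 < \<delta>" "\<delta> \<le> 1/10" using d_def by auto
    have sx: "\<bar>sin x0\<bar> \<le> \<delta>" using A1 hD[of 1 x0] x0S by (simp add: A_def)
    have cx: "1/2 \<le> cos x0" using cosb[of x0] lt by simp
    have omc: "1 - cos x0 \<le> \<delta>"
    proof -
      have "1 - cos x0 \<le> (1 - cos x0) * (1 + cos x0)"
        using cx cos_le_one[of x0] by (simp add: algebra_simps)
      also have "\<dots> = sin x0 * sin x0" using sin_cos_squared_add[of x0] by (simp add: algebra_simps power2_eq_square)
      also have "\<dots> = \<bar>sin x0\<bar> * \<bar>sin x0\<bar>" by (simp add: abs_mult[symmetric])
      also have "\<dots> \<le> \<delta> * 1" using sx dpos by (intro mult_mono) auto
      finally show ?thesis by simp
    qed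
    have omc0: "0 \<le> 1 - cos x0" by simp
    define mu0 where "mu0 = - A 2 x0"
    have mu0e: "mu0 = cos x0 - D 2 x0" by (simp add: mu0_def A_def numeral_2_eq_2)
    have D2: "\<bar>D 2 x0\<bar> \<le> \<delta>" using hD[of 2 x0] x0S by simp
    have D0: "\<bar>D 0 x0\<bar> \<le> \<delta>" using hD[of 0 x0] x0S by simp
    have mu1: "\<bar>mu0 - 1\<bar> \<le> 2 * \<delta>" unfolding mu0e using omc omc0 D2 by arith
    have mupos: "4/5 \<le> mu0" using mu1 dpos by arith
    define am1 where "am1 = 1 + A 0 x0 / A 2 x0"
    have am1e: "am1 = - (D 2 x0 + D 0 x0) / mu0"
    proof -
      have "A 2 x0 = - mu0" by (simp add: mu0_def)
      then have "am1 = 1 - A 0 x0 / mu0" by (simp add: am1_def)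
      also have "\<dots> = (mu0 - A 0 x0) / mu0" using mupos by (simp add: field_simps)
      also have "mu0 - A 0 x0 = - (D 2 x0 + D 0 x0)" by (simp add: mu0e A_def)
      finally show ?thesis .
    qed
    have am1b: "\<bar>am1\<bar> \<le> 3 * \<delta>"
    proof -
      have "\<bar>am1\<bar> = \<bar>D 2 x0 + D 0 x0\<bar> / mu0" using mupos by (simp add: am1e abs_divide)
      also have "\<dots> \<le> (2 * \<delta>) / (4/5)"
        using D2 D0 mupos dpos by (intro frac_le) auto
      also have "\<dots> \<le> 3 * \<delta>" using dpos by simp
      finally show ?thesis .
    qed
    have am1e2: "am1 = 1 - A 0 x0 / mu0" by (simp add: am1_def mu0_def)
    define E where "E = (\<lambda>k y. A k (x0 + y) / mu0 - cder k y)"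
    define X where "X = (\<lambda>k y. E k y - am1 * pder k y)"
    define eta where "eta = (\<lambda>y. A 0 (x0 + y) / mu0 - cos y)"
    define xi where "xi = (\<lambda>y. eta y - am1 * phi_m1 y - 0 * phi_1 y)"
    have TS: "(+) x0 ` {-pi - x0..pi - x0} = {-pi..pi}" by simp
    have dAs: "((\<lambda>y. A k (x0 + y)) has_real_derivative A (Suc k) (x0 + y)) (at y within {-pi - x0..pi - x0})"
      if "k < 3" "y \<in> {-pi - x0..pi - x0}" for k y
    proof -
      have "x0 + y \<in> {-pi..pi}" using that by auto
      then have "(A k has_real_derivative A (Suc k) (x0 + y)) (at ((+) x0 y) within ((+) x0 ` {-pi - x0..pi - x0}))"
        unfolding TS using dA[OF that(1)] by simp
      moreover have "((+) x0 has_real_derivative 1) (at y within {-pi - x0..pi - x0})"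
        by (auto intro!: derivative_eq_intros)
      ultimately show ?thesis using DERIV_image_chain by (fastforce simp: o_def)
    qed
    have dE: "(E k has_real_derivative E (Suc k) y) (at y within {-pi - x0..pi - x0})"
      if "k < 3" "y \<in> {-pi - x0..pi - x0}" for k y
      unfolding E_def by (intro DERIV_diff DERIV_cdivide dAs cder_deriv that)
    have dX: "(X k has_real_derivative X (Suc k) y) (at y within {-pi - x0..pi - x0})"
      if "k < 3" "y \<in> {-pi - x0..pi - x0}" for k y
      unfolding X_def by (intro DERIV_diff DERIV_cmult dE pder_deriv that)
    have ab: "-pi - x0 < pi - x0" using pi_gt_zero by simp
    have hE: "\<forall>y\<in>{-pi - x0..pi - x0}. nderiv j eta {-pi - x0..pi - x0} y = E j y" if "j \<le> 3" for j
      by (rule nderiv_eqI[OF ab, of 3 E]) (use dE that in \<open>auto simp: eta_def E_def\<close>)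
    have hX: "\<forall>y\<in>{-pi - x0..pi - x0}. nderiv j xi {-pi - x0..pi - x0} y = X j y" if "j \<le> 3" for j
      by (rule nderiv_eqI[OF ab, of 3 X]) (use dX that in \<open>auto simp: xi_def eta_def X_def E_def\<close>)
    have T0: "0 \<in> {-pi - x0..pi - x0}" using lt pi_gt_zero unfolding atLeastAtMost_iff by arith
    have g3: "xi 0 = 0"
      using mupos by (simp add: xi_def eta_def am1e2 phi_m1_def field_simps)
    have g4: "nderiv 1 xi {-pi - x0..pi - x0} 0 = 0"
      using hX[of 1] T0 A1 by (simp add: X_def E_def)
    have g5: "nderiv 2 xi {-pi - x0..pi - x0} 0 = 0"
    proof -
      have "A 2 x0 / mu0 = -1" using mupos by (simp add: mu0_def)
      then show ?thesis using hX[of 2] T0 by (simp add: X_def E_def numeral_2_eq_2)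
    qed
    have Eb: "\<bar>E k y\<bar> \<le> 10 * \<delta>" if "k \<le> 3" "y \<in> {-pi - x0..pi - x0}" for k y
    proof -
      have yS: "x0 + y \<in> {-pi..pi}" using that by auto
      define N where "N = cder k (x0 + y) - cder k y + (1 - mu0) * cder k y + D k (x0 + y)"
      have Ee: "E k y = N / mu0"
        using mupos by (simp add: E_def A_def N_def field_simps)
      have Nb: "\<bar>N\<bar> \<le> 5 * \<delta>"
      proof -
        have "\<bar>cder k (x0 + y) - cder k y\<bar> \<le> 2 * \<delta>" using cder_diff[of k x0 y] omc sx by simp
        moreover have "\<bar>(1 - mu0) * cder k y\<bar> \<le> 2 * \<delta> * 1"
          unfolding abs_mult using mu1 cder_bound[of k y] by (intro mult_mono) (auto simp: abs_minus_commute)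
        moreover have "\<bar>D k (x0 + y)\<bar> \<le> \<delta>" using hD[OF that(1) yS] .
        ultimately show ?thesis unfolding N_def by arith
      qed
      have "\<bar>E k y\<bar> = \<bar>N\<bar> / mu0" using mupos by (simp add: Ee abs_divide)
      also have "\<dots> \<le> (5 * \<delta>) / (4/5)"
        using Nb mupos dpos by (intro frac_le) auto
      finally have "\<bar>E k y\<bar> \<le> (5 * \<delta>) / (4/5)" .
      then show ?thesis using dpos by simp
    qed
    have phib: "\<bar>phi_m1 y\<bar> \<le> 9" if "y \<in> {-pi - x0..pi - x0}" for y
    proof -
      have "\<bar>y\<bar> \<le> 16/3" using that lt pi_less_4 unfolding atLeastAtMost_iff by arith
      have "\<bar>phi_m1 y\<bar> \<le> 2 * \<bar>cos y\<bar> + 1 + \<bar>y\<bar> * \<bar>sin y\<bar>"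
        unfolding phi_m1_def using abs_mult[of y "sin y"] by arith
      also have "\<dots> \<le> 2 * 1 + 1 + (16/3) * 1"
        using \<open>\<bar>y\<bar> \<le> 16/3\<close> by (intro add_mono mult_mono) auto
      finally show ?thesis by simp
    qed
    have s1: "supnorm xi {-pi - x0..pi - x0} \<le> 37 * \<delta>"
      unfolding supnorm_def
    proof (rule cSUP_least)
      show "{-pi - x0..pi - x0} \<noteq> {}" using T0 by blast
      fix y assume y: "y \<in> {-pi - x0..pi - x0}"
      have "xi y = E 0 y - am1 * phi_m1 y" by (simp add: xi_def eta_def E_def A_def D_def)
      moreover have "\<bar>E 0 y\<bar> \<le> 10 * \<delta>" using Eb[of 0 y] y by simp
      moreover have "\<bar>am1 * phi_m1 y\<bar> \<le> (3 * \<delta>) * 9"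
        unfolding abs_mult using am1b phib[OF y] by (intro mult_mono) auto
      ultimately show "\<bar>xi y\<bar> \<le> 37 * \<delta>" by arith
    qed
    have s2: "supnorm (nderiv j eta {-pi - x0..pi - x0}) {-pi - x0..pi - x0} \<le> 10 * \<delta>"
      if "j \<in> {1..3}" for j
      unfolding supnorm_def
    proof (rule cSUP_least)
      show "{-pi - x0..pi - x0} \<noteq> {}" using T0 by blast
      fix y assume y: "y \<in> {-pi - x0..pi - x0}"
      show "\<bar>nderiv j eta {-pi - x0..pi - x0} y\<bar> \<le> 10 * \<delta>"
        using hE[of j] Eb[of j y] that y by auto
    qed
    have "(\<Sum>j=1..3. supnorm (nderiv j eta {-pi - x0..pi - x0}) {-pi - x0..pi - x0}) \<le> (\<Sum>j=1..(3::nat). 10 * \<delta>)"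
      by (rule sum_mono) (rule s2)
    also have "\<dots> = 30 * \<delta>" by simp
    finally have s3: "(\<Sum>j=1..3. supnorm (nderiv j eta {-pi - x0..pi - x0}) {-pi - x0..pi - x0}) \<le> 30 * \<delta>" .
    have G: "\<bar>mu0 - 1\<bar> \<le> 100 * \<delta> \<and> \<bar>am1\<bar> \<le> 100 * \<delta> \<and>
            xi 0 = 0 \<and> nderiv 1 xi {-pi - x0..pi - x0} 0 = 0 \<and> nderiv 2 xi {-pi - x0..pi - x0} 0 = 0 \<and>
            supnorm xi {-pi - x0..pi - x0} + (\<Sum>j=1..3. supnorm (nderiv j eta {-pi - x0..pi - x0}) {-pi - x0..pi - x0}) \<le> 100 * \<delta>"
      using mu1 am1b g3 g4 g5 s1 s3 dpos by auto
    show "\<bar>- nderiv 2 (A 0) {- pi..pi} x0 - 1\<bar> \<le> 100 * \<delta> \<and>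
          \<bar>1 + A 0 x0 / nderiv 2 (A 0) {- pi..pi} x0\<bar> \<le> 100 * \<delta> \<and>
          A 0 (x0 + 0) / - nderiv 2 (A 0) {- pi..pi} x0 - cos 0 -
          (1 + A 0 x0 / nderiv 2 (A 0) {- pi..pi} x0) * phi_m1 0 - 0 * phi_1 0 = 0 \<and>
          nderiv 1 (\<lambda>y. A 0 (x0 + y) / - nderiv 2 (A 0) {- pi..pi} x0 - cos y -
                (1 + A 0 x0 / nderiv 2 (A 0) {- pi..pi} x0) * phi_m1 y - 0 * phi_1 y)
           {- pi - x0..pi - x0} 0 = 0 \<and>
          nderiv 2 (\<lambda>y. A 0 (x0 + y) / - nderiv 2 (A 0) {- pi..pi} x0 - cos y -
                (1 + A 0 x0 / nderiv 2 (A 0) {- pi..pi} x0) * phi_m1 y - 0 * phi_1 y)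
           {- pi - x0..pi - x0} 0 = 0 \<and>
          supnorm (\<lambda>y. A 0 (x0 + y) / - nderiv 2 (A 0) {- pi..pi} x0 - cos y -
                (1 + A 0 x0 / nderiv 2 (A 0) {- pi..pi} x0) * phi_m1 y - 0 * phi_1 y)
           {- pi - x0..pi - x0} +
          (\<Sum>j = 1..3. supnorm (nderiv j (\<lambda>y. A 0 (x0 + y) / - nderiv 2 (A 0) {- pi..pi} x0 - cos y)
                 {- pi - x0..pi - x0}) {- pi - x0..pi - x0}) \<le> 100 * \<delta>"
      using G unfolding n2 xi_def eta_def am1_def mu0_def .
  qed
qed

theorem lemma4p5:
  shows "\<exists>\<delta>>0. \<exists>C0>0. \<forall>at0 :: real \<Rightarrow> real.
    Ck_on 3 at0 {-pi..pi} \<and> Ck_norm 3 at0 {-pi..pi} \<le> \<delta> \<longrightarrow>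
    (let a0 = (\<lambda>x. cos x + at0 x) in
      (\<exists>!x0. x0 \<in> {-pi..pi} \<and> (\<forall>x\<in>{-pi..pi}. a0 x \<le> a0 x0)) \<and>
      (\<forall>x0. x0 \<in> {-pi..pi} \<and> (\<forall>x\<in>{-pi..pi}. a0 x \<le> a0 x0) \<longrightarrow>
        (let mu0 = - nderiv 2 a0 {-pi..pi} x0;
             am1 = 1 + a0 x0 / nderiv 2 a0 {-pi..pi} x0;
             a1 = (0::real);
             T = {-pi - x0..pi - x0};
             eta0 = (\<lambda>y. a0 (x0 + y) / mu0 - cos y);
             xi0 = (\<lambda>y. eta0 y - am1 * phi_m1 y - a1 * phi_1 y)
         in \<bar>mu0 - 1\<bar> \<le> C0 * \<delta> \<and> \<bar>am1\<bar> \<le> C0 * \<delta> \<and>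
            xi0 0 = 0 \<and> nderiv 1 xi0 T 0 = 0 \<and> nderiv 2 xi0 T 0 = 0 \<and>
            supnorm xi0 T + (\<Sum>j=1..3. supnorm (nderiv j eta0 T) T) \<le> C0 * \<delta>)))"
  apply (rule exI[where x="1/10"], rule conjI, simp)
  apply (rule exI[where x="100"], rule conjI, simp)
  apply (intro allI impI)
  apply (rule part1[OF refl])
  by auto

end
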